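(* Consider the miners' game with $n\ge2$ miners, parameters $R>0$, $N>0$, unit prices $\lambda_1,\dots,\lambda_n>0$, where miner $s_i$ chooses $\mu_i\ge0$ and receives profit $P_i=\frac{\mu_i}{\sum_{j=1}^n\mu_j}RN-\lambda_i\mu_i$ (the fraction being $0$ if $\sum_j\mu_j=0$). Relabel the miners so that $\lambda_1\le\lambda_2\le\dots\le\lambda_n$. Define $q$ as follows: start with $S'=\{s_1,s_2\}$ and $q=2$; while $q<n$ and $\lambda_{q+1}<\frac{\sum_{s_i\in S'}\lambda_i}{|S'|-1}$, add $s_{q+1}$ to $S'$ and increase $q$ by $1$. Let $\Lambda=\sum_{i=1}^q\lambda_i$ and define $$\mu_i^*=\frac{RN(q-1)}{\Lambda}\left(1-\frac{(q-1)\lambda_i}{\Lambda}\right)\ \text{for } i\le q,\qquad \mu_i^*=0\ \text{for } i>q.$$ Then $(\mu_1^*,\dots,\mu_n^* )$ is a Nash equilibrium of the miners' game.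
   Context: A Nash equilibrium is a profile $(\mu_1^*,\dots,\mu_n^* )$ with all $\mu_i^*\ge 0$ such that no miner $s_i$ can strictly increase $P_i$ by unilaterally changing $\mu_i^*$ to another value $\mu_i\ge0$. *)

theory Defs
  imports Complex_Main
begin

text \<open>Miners are indexed by 1..n; a strategy profile is a function mu :: nat => real
 (only values on {1..n} matter).\<close>

definition profit :: "nat \<Rightarrow> real \<Rightarrow> real \<Rightarrow> (nat \<Rightarrow> real) \<Rightarrow> (nat \<Rightarrow> real) \<Rightarrow> nat \<Rightarrow> real" where
  "profit n R N lam mu i =
     (let S = (\<Sum>j=1..n. mu j) in (if S = 0 then 0 else mu i / S) * R * N - lam i * mu i)"

definition nash_equilibrium :: "nat \<Rightarrow> real \<Rightarrow> real \<Rightarrow> (nat \<Rightarrow> real) \<Rightarrow> (nat \<Rightarrow> real) \<Rightarrow> bool" where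
  "nash_equilibrium n R N lam mu \<longleftrightarrow>
     (\<forall>i\<in>{1..n}. mu i \<ge> 0) \<and>
     (\<forall>i\<in>{1..n}. \<forall>m::real. m \<ge> 0 \<longrightarrow> profit n R N lam (mu(i := m)) i \<le> profit n R N lam mu i)"

function q_loop :: "nat \<Rightarrow> (nat \<Rightarrow> real) \<Rightarrow> nat \<Rightarrow> nat" where
  "q_loop n lam q =
     (if q < n \<and> lam (q + 1) < (\<Sum>i=1..q. lam i) / (real q - 1)
      then q_loop n lam (q + 1) else q)"
  by auto
termination by (relation "measure (\<lambda>(n, lam, q). n - q)") auto

definition q_of :: "nat \<Rightarrow> (nat \<Rightarrow> real) \<Rightarrow> nat" where
  "q_of n lam = q_loop n lam 2"

definition mu_star :: "nat \<Rightarrow> real \<Rightarrow> real \<Rightarrow> (nat \<Rightarrow> real) \<Rightarrow> nat \<Rightarrow> real" where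
  "mu_star n R N lam i =
     (let q = q_of n lam; L = (\<Sum>j=1..q. lam j) in
      if i \<le> q then R * N * (real q - 1) / L * (1 - (real q - 1) * lam i / L) else 0)"

end

theory Submission imports Defs begin

lemma ineq1:
  fixes T A l mu m :: real
  assumes "T > 0" "l > 0" "mu \<ge> 0" "m \<ge> 0" "A * T = l * (T + mu)^2"
  shows "m/(T+m)*A - l*m \<le> mu/(T+mu)*A - l*mu"
proof -
  have p1: "T + m > 0" "T + mu > 0" using assms by auto
  have A: "A = l * (T + mu)^2 / T" using assms(1,5) by (simp add: field_simps)
  have "mu/(T+mu)*A - l*mu - (m/(T+m)*A - l*m) = l*(m-mu)^2/(T+m)"
    unfolding A using assms(1) p1 by (simp add: divide_simps power2_eq_square) (simp add: algebra_simps)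
  moreover have "l*(m-mu)^2/(T+m) \<ge> 0" using assms p1 by simp
  ultimately show ?thesis by linarith
qed

lemma ineq2:
  fixes T A l m :: real
  assumes "T > 0" "l > 0" "m \<ge> 0" "A \<le> l * T"
  shows "m/(T+m)*A - l*m \<le> 0/(T+0)*A - l*0"
proof -
  have "m/(T+m)*A \<le> m/(T+m) * (l*T)" using assms by (intro mult_left_mono) auto
  also have "\<dots> = l*m * (T/(T+m))" by simp
  also have "\<dots> \<le> l*m*1" using assms by (intro mult_left_mono) auto
  finally show ?thesis by simp
qed

declare q_loop.simps[simp del]

lemma loop_props:
  "2 \<le> q \<Longrightarrow> q \<le> n \<Longrightarrow> q \<le> q_loop n lam q \<and> q_loop n lam q \<le> n \<and>
    (\<forall>k. q \<le> k \<and> k < q_loop n lam q \<longrightarrow> lam (k+1) < (\<Sum>i=1..k. lam i) / (real k - 1)) \<and>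
    (q_loop n lam q < n \<longrightarrow> \<not> lam (q_loop n lam q + 1) < (\<Sum>i=1..q_loop n lam q. lam i) / (real (q_loop n lam q) - 1))"
proof (induction n lam q rule: q_loop.induct)
  case (1 n lam q)
  show ?case
  proof (cases "q < n \<and> lam (q + 1) < (\<Sum>i=1..q. lam i) / (real q - 1)")
    case True
    have e: "q_loop n lam q = q_loop n lam (q+1)" using True by (subst q_loop.simps) simp
    have IH: "q + 1 \<le> q_loop n lam (q+1) \<and> q_loop n lam (q+1) \<le> n \<and>
    (\<forall>k. q+1 \<le> k \<and> k < q_loop n lam (q+1) \<longrightarrow> lam (k+1) < (\<Sum>i=1..k. lam i) / (real k - 1)) \<and>
    (q_loop n lam (q+1) < n \<longrightarrow> \<not> lam (q_loop n lam (q+1) + 1) < (\<Sum>i=1..q_loop n lam (q+1). lam i) / (real (q_loop n lam (q+1)) - 1))"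
      using 1 True by simp
    have "\<forall>k. q \<le> k \<and> k < q_loop n lam (q+1) \<longrightarrow> lam (k+1) < (\<Sum>i=1..k. lam i) / (real k - 1)"
    proof (intro allI impI)
      fix k assume k: "q \<le> k \<and> k < q_loop n lam (q+1)"
      show "lam (k+1) < (\<Sum>i=1..k. lam i) / (real k - 1)"
      proof (cases "k = q")
        case True then show ?thesis using \<open>q < n \<and> _\<close> by simp
      next
        case False then show ?thesis using IH k by auto
      qed
    qed
    then show ?thesis unfolding e using IH by auto
  next
    case False
    then have e: "q_loop n lam q = q" by (subst q_loop.simps) (simp only: if_False)
    show ?thesis unfolding e using 1 False by auto
  qed
qed

lemma sum_upd:
  fixes mu :: "nat \<Rightarrow> real"
  assumes "i \<in> {1..n}"
  shows "(\<Sum>j=1..n. (mu(i:=m)) j) = (\<Sum>j=1..n. mu j) - mu i + m"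
proof -
  have "(\<Sum>j=1..n. (mu(i:=m)) j) = (mu(i:=m)) i + (\<Sum>j\<in>{1..n}-{i}. (mu(i:=m)) j)"
    using assms by (intro sum.remove) auto
  also have "(\<Sum>j\<in>{1..n}-{i}. (mu(i:=m)) j) = (\<Sum>j\<in>{1..n}-{i}. mu j)" by (intro sum.cong) auto
  also have "\<dots> = (\<Sum>j=1..n. mu j) - mu i" using assms by (simp add: sum_diff1)
  finally show ?thesis by simp
qed

lemma dev:
  fixes mu :: "nat \<Rightarrow> real"
  assumes "i \<in> {1..n}" "T = (\<Sum>j=1..n. mu j) - mu i" "T > 0" "m \<ge> 0"
  shows "profit n R N lam (mu(i:=m)) i = m/(T+m)*R*N - lam i * m"
  using assms unfolding profit_def Let_def sum_upd[OF assms(1)] by auto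

theorem theorem2:
  fixes n :: nat and R N :: real and lam :: "nat \<Rightarrow> real"
  assumes "n \<ge> 2" and "R > 0" and "N > 0"
    and "\<And>i. i \<in> {1..n} \<Longrightarrow> lam i > 0"
    and "\<And>i j. i \<in> {1..n} \<Longrightarrow> j \<in> {1..n} \<Longrightarrow> i \<le> j \<Longrightarrow> lam i \<le> lam j"
  shows "nash_equilibrium n R N lam (mu_star n R N lam)"
proof -
  define q where "q = q_of n lam"
  have LP: "2 \<le> q \<and> q \<le> n \<and>
    (\<forall>k. 2 \<le> k \<and> k < q \<longrightarrow> lam (k+1) < (\<Sum>i=1..k. lam i) / (real k - 1)) \<and>
    (q < n \<longrightarrow> \<not> lam (q + 1) < (\<Sum>i=1..q. lam i) / (real q - 1))"
    using loop_props[of 2 n lam] assms(1) unfolding q_def q_of_def by simp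
  hence q2: "2 \<le> q" and qn: "q \<le> n" by auto
  define L where "L = (\<Sum>j=1..q. lam j)"
  define A where "A = R * N"
  have A0: "A > 0" using assms(2,3) by (simp add: A_def)
  have Lpos: "L > 0" unfolding L_def using q2 qn assms(4)
    by (intro sum_pos) auto
  have q1: "real q - 1 > 0" using q2 by simp
  define c where "c = A * (real q - 1) / L"
  have c0: "c > 0" using A0 q1 Lpos by (simp add: c_def)
  have mu: "mu_star n R N lam i = (if i \<le> q then c * (1 - (real q - 1) * lam i / L) else 0)" for i
    unfolding mu_star_def Let_def q_def[symmetric] L_def[symmetric] c_def A_def by simp
  have key1: "(real q - 1) * lam i < L" if i: "i \<in> {1..q}" for i
  proof -
    have liq: "lam i \<le> lam q" using assms(5)[of i q] i qn by auto
    have "(real q - 1) * lam q < L"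
    proof (cases "q = 2")
      case True
      then show ?thesis unfolding L_def using assms(4)[of 1] assms(1) by (simp add: numeral_2_eq_2)
    next
      case False
      then have q3: "q \<ge> 3" using q2 by simp
      define k where "k = q - 1"
      have k: "q = k + 1" "k \<ge> 2" using q3 unfolding k_def by auto
      have "lam (k+1) < (\<Sum>i=1..k. lam i) / (real k - 1)" using LP k by auto
      moreover have "real k - 1 > 0" using k by simp
      ultimately have "(real k - 1) * lam (k+1) < (\<Sum>i=1..k. lam i)" by (simp add: field_simps)
      moreover have "L = (\<Sum>i=1..k. lam i) + lam (k+1)" unfolding L_def k(1) by simp
      ultimately show ?thesis using k by (simp add: algebra_simps)
    qed
    moreover have "(real q - 1) * lam i \<le> (real q - 1) * lam q" using liq q1 by simp
    ultimately show ?thesis by linarith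
  qed
  have key2: "A \<le> lam i * c" if i: "q < i" "i \<le> n" for i
  proof -
    have "lam (q+1) \<le> lam i" using assms(5)[of "q+1" i] i by auto
    moreover have "\<not> lam (q + 1) < L / (real q - 1)" using LP i L_def by auto
    ultimately have "L \<le> lam (q+1) * (real q - 1)" "lam (q+1) \<le> lam i" using q1 by (simp_all add: field_simps)
    then have "L \<le> lam i * (real q - 1)" using q1 by (meson mult_right_mono order_trans less_imp_le)
    then have "A * L \<le> A * (lam i * (real q - 1))" using A0 by simp
    then show ?thesis unfolding c_def using Lpos by (simp add: field_simps)
  qed
  have S: "(\<Sum>j=1..n. mu_star n R N lam j) = c"
  proof -
    have "(\<Sum>j=1..n. mu_star n R N lam j) = (\<Sum>j=1..q. mu_star n R N lam j)"
      using qn by (intro sum.mono_neutral_cong_right) (auto simp: mu)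
    also have "\<dots> = (\<Sum>j=1..q. c - c * (real q - 1) / L * lam j)"
      by (intro sum.cong) (auto simp: mu algebra_simps)
    also have "\<dots> = c * real q - c * (real q - 1) / L * L"
      unfolding sum_subtractf sum_distrib_left[symmetric] L_def by simp
    also have "\<dots> = c" using Lpos by (simp add: field_simps)
    finally show ?thesis .
  qed
  show ?thesis unfolding nash_equilibrium_def
  proof (intro conjI ballI allI impI)
    fix i assume i: "i \<in> {1..n}"
    show "mu_star n R N lam i \<ge> 0"
    proof (cases "i \<le> q")
      case True
      then have "(real q - 1) * lam i < L" using key1 i by auto
      then have "(real q - 1) * lam i / L < 1" using Lpos by simp
      then show ?thesis using True c0 by (simp add: mu)
    qed (simp add: mu)
  next
    fix i and m :: real assume i: "i \<in> {1..n}" and m: "m \<ge> 0"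
    define T where "T = (\<Sum>j=1..n. mu_star n R N lam j) - mu_star n R N lam i"
    have li: "lam i > 0" using assms(4) i by simp
    show "profit n R N lam ((mu_star n R N lam)(i := m)) i \<le> profit n R N lam (mu_star n R N lam) i"
    proof (cases "i \<le> q")
      case True
      have ml: "(real q - 1) * lam i < L" using key1 i True by auto
      have Te: "T = c * (real q - 1) * lam i / L" unfolding T_def S using True Lpos
        by (simp add: mu field_simps)
      have T0: "T > 0" unfolding Te using c0 q1 li Lpos by simp
      have mi0: "mu_star n R N lam i \<ge> 0"
      proof -
        have "(real q - 1) * lam i / L < 1" using ml Lpos by simp
        then show ?thesis using True c0 by (simp add: mu)
      qed
      have TM: "T + mu_star n R N lam i = c" unfolding T_def S by simp
      have AT: "A * T = lam i * (T + mu_star n R N lam i)^2"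
      proof -
        have "A * T = lam i * c^2"
          unfolding Te c_def using Lpos by (simp add: field_simps power2_eq_square)
        then show ?thesis by (simp only: TM)
      qed
      have d1: "profit n R N lam ((mu_star n R N lam)(i := m)) i = m/(T+m)*A - lam i * m"
        using dev[OF i T_def T0 m] by (simp add: A_def)
      have d2: "profit n R N lam (mu_star n R N lam) i = mu_star n R N lam i/(T+mu_star n R N lam i)*A - lam i * mu_star n R N lam i"
        using dev[OF i T_def T0 mi0] by (simp add: A_def)
      show ?thesis unfolding d1 d2 by (rule ineq1[OF T0 li mi0 m AT])
    next
      case False
      have m0: "mu_star n R N lam i = 0" using False by (simp add: mu)
      have Te: "T = c" unfolding T_def S m0 by simp
      have T0: "T > 0" using Te c0 by simp
      have d1: "profit n R N lam ((mu_star n R N lam)(i := m)) i = m/(T+m)*A - lam i * m"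
        using dev[OF i T_def T0 m] by (simp add: A_def)
      have d2: "profit n R N lam (mu_star n R N lam) i = 0/(T+0)*A - lam i * 0"
      proof -
        have "(mu_star n R N lam)(i := 0) = mu_star n R N lam" using m0 by auto
        then show ?thesis using dev[OF i T_def T0, of 0 R N lam] by (simp add: A_def)
      qed
      have "A \<le> lam i * T" using key2[of i] False i Te by auto
      then show ?thesis unfolding d1 d2 by (rule ineq2[OF T0 li m])
    qed
  qed
qed

end
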